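(* Let $-\beta\in(0,1)$, $c\in(0,1)$ and let $n\geq 2$ be an integer. Let $C_n=-\beta+\frac{(n+1)c}{1-c}$ and assume that $M_n(C_n;\beta,c)\neq 0$. Then the $n+1$ zeros of the polynomial $(x-C_n)M_n(x;\beta,c)$ interlace with the $n+1$ zeros of $M_{n+1}(x;\beta+1,c)$.
   Context: Monic Meixner polynomials are defined by $$M_n(x;\beta,c)=\left(\frac{c}{c-1}\right)^n(\beta)_n\sum_{k=0}^{n}\frac{(-n)_k(-x)_k(1-\frac1c)^k}{(\beta)_k\,k!},$$ for real $\beta,c$ with $c\neq 0$ and $\beta\notin\{-1,-2,\dots,-n+1\}$, where $(\alpha)_0=1$ and $(\alpha)_k=\alpha(\alpha+1)\cdots(\alpha+k-1)$ for $k\geq1$. For the parameters considered, the zeros of $M_n(x;\beta,c)$ and of $M_{n+1}(x;\beta+1,c)$ are real and distinct. Two sets of $m$ real numbers each "interlace" if, when all $2m$ numbers are listed in increasing order, they are distinct and elements of the two sets strictly alternate. *)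

theory Defs
  imports Complex_Main
begin

text \<open>Monic Meixner polynomial M_n(x; beta, c), as a real function of x.\<close>
definition meixner :: "nat \<Rightarrow> real \<Rightarrow> real \<Rightarrow> real \<Rightarrow> real" where
  "meixner n x b c =
     (c / (c - 1)) ^ n * pochhammer b n *
     (\<Sum>k\<le>n. pochhammer (- real n) k * pochhammer (- x) k * (1 - 1 / c) ^ k
               / (pochhammer b k * fact k))"

definition interlace :: "real set \<Rightarrow> real set \<Rightarrow> bool" where
  "interlace A B \<longleftrightarrow> finite A \<and> finite B \<and> card A = card B \<and>
     (let a = sorted_list_of_set A; b = sorted_list_of_set B; m = card A in
       (\<forall>i<m. a ! i < b ! i \<and> (Suc i < m \<longrightarrow> b ! i < a ! Suc i)) \<or>
       (\<forall>i<m. b ! i < a ! i \<and> (Suc i < m \<longrightarrow> a ! i < b ! Suc i)))"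

end

theory Submission
  imports Defs "HOL-Computational_Algebra.Polynomial"
begin

definition T :: "real \<Rightarrow> real \<Rightarrow> nat \<Rightarrow> nat \<Rightarrow> real" where
  "T a c m j = (-1)^j * real (m choose j) * pochhammer (a + real j) (m - j) * (c/(c-1))^(m-j)"

lemma poch_neg_nat: "pochhammer (- real m) j / fact j = (-1)^j * real (m choose j)"
proof -
  have "(real m gchoose j) = (-1)^j * pochhammer (- real m) j / fact j"
    by (simp add: gbinomial_pochhammer)
  hence "pochhammer (- real m) j / fact j = (-1)^j * (real m gchoose j)"
    by (simp add: power_mult_distrib[symmetric])
  thus ?thesis by (simp add: binomial_gbinomial)
qed

lemma meixner_basis:
  assumes "\<forall>k. pochhammer a k \<noteq> 0" "c \<noteq> 0" "c \<noteq> 1"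
  shows "meixner m x a c = (\<Sum>j\<le>m. T a c m j * pochhammer (-x) j)"
  unfolding meixner_def sum_distrib_left
proof (rule sum.cong[OF refl])
  fix j assume "j \<in> {..m}"
  hence jm: "j \<le> m" by simp
  then obtain d where md: "m = j + d" using le_Suc_ex by blast
  have p: "pochhammer a m = pochhammer a j * pochhammer (a + real j) d"
    using pochhammer_product[OF jm, of a] md by simp
  have u: "(c/(c-1))^m * (1 - 1/c)^j = (c/(c-1))^d"
  proof -
    have "(c/(c-1)) * (1 - 1/c) = 1" using assms(2,3) by (simp add: field_simps)
    hence "(c/(c-1))^j * (1 - 1/c)^j = 1" by (metis power_mult_distrib power_one)
    thus ?thesis using md by (simp add: power_add)
  qed
  have q: "pochhammer (- real m) j = fact j * ((-1)^j * real (m choose j))"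
    using poch_neg_nat[of m j] by (simp add: field_simps)
  have "(c / (c - 1)) ^ m * pochhammer a m *
        (pochhammer (- real m) j * pochhammer (- x) j * (1 - 1 / c) ^ j / (pochhammer a j * fact j))
     = ((c/(c-1))^m * (1 - 1/c)^j) * (pochhammer a m / pochhammer a j) * (pochhammer (- real m) j / fact j) * pochhammer (- x) j"
    by (simp add: field_simps)
  also have "\<dots> = (c/(c-1))^d * pochhammer (a + real j) d * ((-1)^j * real (m choose j)) * pochhammer (- x) j"
    using u p assms(1) poch_neg_nat[of m j] by simp
  also have "\<dots> = T a c m j * pochhammer (-x) j"
    unfolding T_def using md by simp
  finally show "(c / (c - 1)) ^ m * pochhammer a m *
        (pochhammer (- real m) j * pochhammer (- x) j * (1 - 1 / c) ^ j / (pochhammer a j * fact j))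
     = T a c m j * pochhammer (-x) j" .
qed

lemma contig_term:
  assumes "c \<noteq> 1" "j \<le> n" "n \<ge> 1"
  shows "T b c n j = T (b+1) c n j + (real n * c/(1-c)) * T (b+1) c (n-1) j"
proof (cases "j = n")
  case True thus ?thesis using assms by (simp add: T_def)
next
  case False
  then obtain s where ns: "n = Suc (j + s)" using assms(2) by (metis add_Suc_right le_neq_implies_less less_imp_Suc_add)
  define u where "u = c/(c-1)"
  define P where "P = pochhammer (b + 1 + real j) s"
  define Cc where "Cc = real (Suc (j+s) choose j)"
  define Cb where "Cb = real ((j+s) choose j)"
  have bin: "real (Suc s) * Cc = real (Suc (j+s)) * Cb"
  proof -
    have "(Suc (j+s) - j) * (Suc (j+s) choose j) = Suc (j+s) * ((Suc (j+s) - 1) choose j)"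
      by (rule binomial_absorb_comp)
    hence "Suc s * (Suc (j+s) choose j) = Suc (j+s) * ((j+s) choose j)" by (simp add: Suc_diff_le)
    thus ?thesis unfolding Cc_def Cb_def by (metis of_nat_mult)
  qed
  have p1: "pochhammer (b + real j) (Suc s) = (b + real j) * P"
    unfolding P_def by (simp add: pochhammer_rec add_ac)
  have p2: "pochhammer (b + 1 + real j) (Suc s) = P * (b + 1 + real j + real s)"
    unfolding P_def by (simp add: pochhammer_Suc)
  have cc: "c - 1 \<noteq> 0" "1 - c \<noteq> 0" using assms(1) by auto
  have al: "real n * c/(1-c) = - real (Suc (j+s)) * u"
    unfolding u_def ns using cc by (simp add: field_simps)
  have e1: "T b c n j = (-1)^j * Cc * ((b + real j) * P) * (u^s * u)"
    unfolding T_def ns Cc_def u_def using p1 by (simp add: Suc_diff_le)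
  have e2: "T (b+1) c n j = (-1)^j * Cc * (P * (b + 1 + real j + real s)) * (u^s * u)"
    unfolding T_def ns Cc_def u_def using p2 by (simp add: Suc_diff_le add_ac)
  have e3: "T (b+1) c (n-1) j = (-1)^j * Cb * P * u^s"
    unfolding T_def ns Cb_def u_def P_def by (simp add: add_ac)
  have "(real n * c/(1-c)) * T (b+1) c (n-1) j = - (real (Suc s) * Cc) * u * ((-1)^j * P * u^s)"
    unfolding al e3 bin by (simp add: algebra_simps)
  thus ?thesis unfolding e1 e2 by (simp add: algebra_simps)
qed

definition Aco :: "real \<Rightarrow> real \<Rightarrow> nat \<Rightarrow> real" where
  "Aco a c m = (real m + (real m + a) * c) / (1 - c)"
definition Bco :: "real \<Rightarrow> real \<Rightarrow> nat \<Rightarrow> real" where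
  "Bco a c m = real m * (real m + a - 1) * c / (1 - c)^2"

lemma core_id:
  fixes a c j s C0 C1 C2 Cm :: real
  assumes c: "c \<noteq> 1" and s: "s \<ge> 0"
    and h1: "(s+1) * C1 = (j+s+1) * C0" and h2: "(s+2)*C2 = (j+s+2)*C1" and h3: "(s+2)*Cm = j*C1"
  shows "C2 * ((a+j+s)*(a+j+s+1)) * (c/(c-1))^2 =
     C1 * (a+j+s) * (c/(c-1)) * (j - (j+s+1 + (j+s+1+a)*c)/(1-c))
     + Cm * ((a+j-1)*(a+j+s)) * (c/(c-1))^2 - (j+s+1)*(j+s+a)*c/(1-c)^2 * C0"
proof -
  define K where "K = C0/((s+1)*(s+2))"
  have ne: "s + 1 \<noteq> 0" "s + 2 \<noteq> 0" using s by auto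
  have k0: "C0 = (s+1)*(s+2)*K" unfolding K_def using ne by simp
  have kk: "(s+2)*K = C0/(s+1)" unfolding K_def using ne by simp
  have k1': "C1 = (j+s+1)*C0/(s+1)" using h1 ne by (simp add: field_simps)
  have k1: "C1 = (j+s+1)*(s+2)*K" unfolding k1' using kk by (simp add: mult.assoc)
  have "(s+2)*C2 = (s+2)*((j+s+2)*(j+s+1)*K)" unfolding h2 k1 by algebra
  hence k2: "C2 = (j+s+2)*(j+s+1)*K" using ne(2) by simp
  have "(s+2)*Cm = (s+2)*(j*(j+s+1)*K)" unfolding h3 k1 by algebra
  hence km: "Cm = j*(j+s+1)*K" using ne(2) by simp
  have cc: "c - 1 \<noteq> 0" "1 - c \<noteq> 0" using c by auto
  define w where "w = c/(1-c)"
  have w1: "c/(c-1) = -w" unfolding w_def using cc by (simp add: field_simps)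
  have w2: "(j+s+1 + (j+s+1+a)*c)/(1-c) = (j+s+1) + (2*(j+s+1)+a)*w"
    unfolding w_def using cc by (simp add: field_simps)
  have w3: "(j+s+1)*(j+s+a)*c/(1-c)^2 = (j+s+1)*(j+s+a)*(w*(1+w))"
    unfolding w_def using cc by (simp add: field_simps power2_eq_square)
  show ?thesis unfolding w1 w2 w3 unfolding k0 k1 k2 km by algebra
qed

lemma ttrr_term:
  assumes c: "c \<noteq> 1" and jk: "j \<le> k + 2"
  shows "T a c (k+2) j = T a c (k+1) j * (real j - Aco a c (k+1))
           - (if j = 0 then 0 else T a c (k+1) (j-1)) - Bco a c (k+1) * T a c k j"
proof -
  have cc: "c - 1 \<noteq> 0" "1 - c \<noteq> 0" using c by auto
  consider "j = k + 2" | "j = k + 1" | "j \<le> k" using jk by linarith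
  thus ?thesis
  proof cases
    case 1 thus ?thesis by (simp add: T_def binomial_eq_0 del: binomial_Suc_Suc)
  next
    case 2
    have "T a c (k+2) j = (-1)^(k+1) * real (k+2) * (a + real k + 1) * (c/(c-1))"
      using 2 by (simp add: T_def add_ac)
    moreover have "T a c (k+1) j = (-1)^(k+1)" using 2 by (simp add: T_def)
    moreover have "T a c (k+1) (j-1) = (-1)^k * real (k+1) * (a + real k) * (c/(c-1))"
      using 2 by (simp add: T_def add_ac)
    moreover have "T a c k j = 0" using 2 by (simp add: T_def)
    ultimately show ?thesis using 2 cc unfolding Aco_def
      by (simp add: field_simps)
  next
    case 3
    then obtain s where ks: "k = j + s" using le_Suc_ex by blast
    define u where "u = c/(c-1)"
    define P where "P = pochhammer (a + real j) s"
    define U where "U = u^s"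
    define C0 where "C0 = real ((j+s) choose j)"
    define C1 where "C1 = real (Suc (j+s) choose j)"
    define C2 where "C2 = real (Suc (Suc (j+s)) choose j)"
    define Cm where "Cm = (if j = 0 then 0 else real (Suc (j+s) choose (j-1)))"
    have h1: "(real s+1) * C1 = (real j+real s+1) * C0"
    proof -
      have "(Suc (j+s) - j) * (Suc (j+s) choose j) = Suc (j+s) * ((Suc (j+s) - 1) choose j)"
        by (rule binomial_absorb_comp)
      hence "Suc s * (Suc (j+s) choose j) = Suc (j+s) * ((j+s) choose j)" by (simp add: Suc_diff_le)
      hence "real (Suc s * (Suc (j+s) choose j)) = real (Suc (j+s) * ((j+s) choose j))" by simp
      thus ?thesis unfolding C1_def C0_def by (simp add: algebra_simps)
    qed
    have h2: "(real s+2) * C2 = (real j+real s+2) * C1"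
    proof -
      have "(Suc (Suc (j+s)) - j) * (Suc (Suc (j+s)) choose j) = Suc (Suc (j+s)) * ((Suc (Suc (j+s)) - 1) choose j)"
        by (rule binomial_absorb_comp)
      hence "Suc (Suc s) * (Suc (Suc (j+s)) choose j) = Suc (Suc (j+s)) * (Suc (j+s) choose j)" by (simp add: Suc_diff_le)
      hence "real (Suc (Suc s) * (Suc (Suc (j+s)) choose j)) = real (Suc (Suc (j+s)) * (Suc (j+s) choose j))" by simp
      thus ?thesis unfolding C1_def C2_def by (simp add: algebra_simps)
    qed
    have h3: "(real s+2) * Cm = real j * C1"
    proof (cases "j = 0")
      case True thus ?thesis unfolding Cm_def by simp
    next
      case False
      then obtain i where ji: "j = Suc i" using not0_implies_Suc by blast
      have e1: "j * (Suc (j+s) choose j) = Suc (j+s) * ((Suc (j+s) - 1) choose (j - 1))"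
        using False by (intro times_binomial_minus1_eq) simp
      have e2: "(Suc (j+s) - (j-1)) * (Suc (j+s) choose (j-1)) = Suc (j+s) * ((Suc (j+s) - 1) choose (j-1))"
        by (rule binomial_absorb_comp)
      have "Suc (Suc s) * (Suc (j+s) choose (j-1)) = j * (Suc (j+s) choose j)"
        using e1 e2 ji by simp
      hence "real (Suc (Suc s) * (Suc (j+s) choose (j-1))) = real (j * (Suc (j+s) choose j))" by simp
      thus ?thesis unfolding Cm_def C1_def using False by (simp add: algebra_simps)
    qed
    have E: "C2 * ((a+real j+real s)*(a+real j+real s+1)) * (c/(c-1))^2 =
     C1 * (a+real j+real s) * (c/(c-1)) * (real j - (real j+real s+1 + (real j+real s+1+a)*c)/(1-c))
     + Cm * ((a+real j-1)*(a+real j+real s)) * (c/(c-1))^2 - (real j+real s+1)*(real j+real s+a)*c/(1-c)^2 * C0"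
      by (rule core_id[OF c _ h1 h2 h3]) simp
    have t2: "T a c (k+2) j = (-1)^j * C2 * (P * (a+real j+real s) * (a+real j+real s+1)) * (U * u^2)"
      unfolding T_def ks C2_def P_def U_def u_def
      by (simp add: Suc_diff_le pochhammer_Suc add_ac power2_eq_square)
    have t1: "T a c (k+1) j = (-1)^j * C1 * (P * (a+real j+real s)) * (U * u)"
      unfolding T_def ks C1_def P_def U_def u_def
      by (simp add: Suc_diff_le pochhammer_Suc add_ac)
    have t0: "T a c k j = (-1)^j * C0 * P * U"
      unfolding T_def ks C0_def P_def U_def u_def by simp
    have tm: "(if j = 0 then 0 else T a c (k+1) (j-1)) = - ((-1)^j * Cm * ((a+real j-1) * P * (a+real j+real s)) * (U * u^2))"
    proof (cases "j = 0")
      case True thus ?thesis unfolding Cm_def by simp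
    next
      case False
      then obtain i where ji: "j = Suc i" using not0_implies_Suc by blast
      have q1: "pochhammer (a + real i) (Suc (Suc s)) = (a + real i) * pochhammer (a + real i + 1) (Suc s)"
        by (rule pochhammer_rec)
      have q2: "pochhammer (a + real i + 1) (Suc s) = pochhammer (a + real i + 1) s * (a + real i + 1 + real s)"
        by (rule pochhammer_Suc)
      have "pochhammer (a + real i) (Suc (Suc s)) = (a + real i) * (pochhammer (a + real i + 1) s * (a + real i + 1 + real s))"
        using q1 q2 by simp
      thus ?thesis unfolding T_def ks Cm_def P_def U_def u_def ji
        by (simp add: add_ac power2_eq_square)
    qed
    have AB: "Aco a c (k+1) = (real j+real s+1 + (real j+real s+1+a)*c)/(1-c)"
             "Bco a c (k+1) = (real j+real s+1)*(real j+real s+a)*c/(1-c)^2"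
      unfolding Aco_def Bco_def ks by (simp_all add: add_ac)
    define Ae where "Ae = (real j+real s+1 + (real j+real s+1+a)*c)/(1-c)"
    define Be where "Be = (real j+real s+1)*(real j+real s+a)*c/(1-c)^2"
    have E': "C2 * ((a+real j+real s)*(a+real j+real s+1)) * u^2 =
     C1 * (a+real j+real s) * u * (real j - Ae) + Cm * ((a+real j-1)*(a+real j+real s)) * u^2 - Be * C0"
      using E unfolding Ae_def Be_def u_def by simp
    have AB': "Aco a c (k+1) = Ae" "Bco a c (k+1) = Be" using AB unfolding Ae_def Be_def by simp_all
    have E'': "((-1)^j*P*U) * (C2 * ((a+real j+real s)*(a+real j+real s+1)) * u^2) =
     ((-1)^j*P*U) * (C1 * (a+real j+real s) * u * (real j - Ae) + Cm * ((a+real j-1)*(a+real j+real s)) * u^2 - Be * C0)"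
      using E' by simp
    show ?thesis unfolding t2 t1 t0 tm AB' using E'' by (simp add: algebra_simps)
  qed
qed

lemma T_zero: "m < j \<Longrightarrow> T a c m j = 0"
  by (simp add: T_def binomial_eq_0)

lemma sum_T_ext:
  assumes "m \<le> M"
  shows "(\<Sum>j\<le>m. T a c m j * g j) = (\<Sum>j\<le>M. T a c m j * g j)"
  by (rule sum.mono_neutral_left) (use assms in \<open>auto simp: T_zero\<close>)

lemma x_poch: "x * pochhammer (-x) j = real j * pochhammer (-x) j - pochhammer (-x) (Suc j)"
  by (simp add: pochhammer_Suc algebra_simps)

lemma meixner_ttrr:
  assumes a: "\<forall>k. pochhammer a k \<noteq> 0" and c: "c \<noteq> 0" "c \<noteq> 1"
  shows "meixner (k+2) x a c = (x - Aco a c (k+1)) * meixner (k+1) x a c - Bco a c (k+1) * meixner k x a c"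
proof -
  define A where "A = Aco a c (k+1)"
  define B where "B = Bco a c (k+1)"
  define \<phi> where "\<phi> j = pochhammer (-x) j" for j
  have mb: "meixner m x a c = (\<Sum>j\<le>m. T a c m j * \<phi> j)" for m
    unfolding \<phi>_def by (rule meixner_basis[OF a c])
  have "meixner (k+2) x a c = (\<Sum>j\<le>k+2. (T a c (k+1) j * (real j - A)
           - (if j = 0 then 0 else T a c (k+1) (j-1)) - B * T a c k j) * \<phi> j)"
    unfolding mb A_def B_def
    apply (rule sum.cong[OF refl])
    subgoal for j using ttrr_term[OF c(2), of j k a] by simp
    done
  also have "\<dots> = (\<Sum>j\<le>k+2. T a c (k+1) j * ((real j - A) * \<phi> j)
           - (if j = 0 then 0 else T a c (k+1) (j-1)) * \<phi> j - B * (T a c k j * \<phi> j))"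
    by (rule sum.cong[OF refl]) (simp only: left_diff_distrib mult.assoc)
  also have "\<dots> = (\<Sum>j\<le>k+2. T a c (k+1) j * ((real j - A) * \<phi> j))
        - (\<Sum>j\<le>k+2. (if j = 0 then 0 else T a c (k+1) (j-1)) * \<phi> j)
        - B * (\<Sum>j\<le>k+2. T a c k j * \<phi> j)"
    by (simp only: sum_subtractf sum_distrib_left)
  also have "(\<Sum>j\<le>k+2. T a c (k+1) j * ((real j - A) * \<phi> j)) = (\<Sum>j\<le>k+1. T a c (k+1) j * ((real j - A) * \<phi> j))"
    by (rule sum_T_ext[symmetric]) simp
  also have "(\<Sum>j\<le>k+2. T a c k j * \<phi> j) = meixner k x a c"
    unfolding mb by (rule sum_T_ext[symmetric]) simp
  also have "(\<Sum>j\<le>k+2. (if j = 0 then 0 else T a c (k+1) (j-1)) * \<phi> j) = (\<Sum>j\<le>k+1. T a c (k+1) j * \<phi> (Suc j))"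
    unfolding add_2_eq_Suc' by (subst sum.atMost_Suc_shift) (simp del: sum.atMost_Suc)
  also have "(\<Sum>j\<le>k+1. T a c (k+1) j * ((real j - A) * \<phi> j)) - (\<Sum>j\<le>k+1. T a c (k+1) j * \<phi> (Suc j))
      = (\<Sum>j\<le>k+1. T a c (k+1) j * ((x - A) * \<phi> j))"
    unfolding sum_subtractf[symmetric]
  proof (rule sum.cong[OF refl])
    fix j
    have "(x - A) * \<phi> j = (real j - A) * \<phi> j - \<phi> (Suc j)"
      using x_poch[of x j] unfolding \<phi>_def by (simp add: left_diff_distrib)
    thus "T a c (k+1) j * ((real j - A) * \<phi> j) - T a c (k+1) j * \<phi> (Suc j) = T a c (k+1) j * ((x - A) * \<phi> j)"
      by (simp add: right_diff_distrib)
  qed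
  also have "\<dots> = (x - A) * meixner (k+1) x a c"
    unfolding mb sum_distrib_left by (simp only: mult.left_commute)
  finally show ?thesis unfolding A_def B_def by simp
qed

lemma meixner_0: "meixner 0 x a c = 1"
  by (simp add: meixner_def)

lemma meixner_1:
  assumes "a \<noteq> 0" "c \<noteq> 0" "c \<noteq> 1"
  shows "meixner 1 x a c = x - Aco a c 0"
proof -
  have "c - 1 \<noteq> 0" "1 - c \<noteq> 0" using assms by auto
  have "meixner 1 x a c = c/(c-1) * a * (1 + (- 1) * (- x) * (1 - 1/c) / a)"
    unfolding meixner_def by simp
  also have "\<dots> = x - Aco a c 0"
    unfolding Aco_def using assms \<open>c - 1 \<noteq> 0\<close> \<open>1 - c \<noteq> 0\<close> by (simp add: field_simps)
  finally show ?thesis .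
qed

lemma meixner_contig:
  assumes a: "\<forall>k. pochhammer b k \<noteq> 0" "\<forall>k. pochhammer (b+1) k \<noteq> 0" and c: "c \<noteq> 0" "c \<noteq> 1" and n: "n \<ge> 1"
  shows "meixner n x b c = meixner n x (b+1) c + (real n * c/(1-c)) * meixner (n-1) x (b+1) c"
proof -
  have "meixner n x b c = (\<Sum>j\<le>n. (T (b+1) c n j + (real n * c/(1-c)) * T (b+1) c (n-1) j) * pochhammer (-x) j)"
    unfolding meixner_basis[OF a(1) c]
    apply (rule sum.cong[OF refl])
    subgoal for j using contig_term[OF c(2), of j n b] n by simp
    done
  also have "\<dots> = meixner n x (b+1) c + (real n * c/(1-c)) * (\<Sum>j\<le>n. T (b+1) c (n-1) j * pochhammer (-x) j)"
    unfolding meixner_basis[OF a(2) c] by (simp add: sum.distrib sum_distrib_left distrib_right mult.assoc)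
  also have "(\<Sum>j\<le>n. T (b+1) c (n-1) j * pochhammer (-x) j) = meixner (n-1) x (b+1) c"
    unfolding meixner_basis[OF a(2) c] by (rule sum_T_ext[symmetric]) simp
  finally show ?thesis .
qed

definition lin :: "real list \<Rightarrow> real poly" where
  "lin ts = prod_list (map (\<lambda>t. [:-t, 1:]) ts)"

lemma lin_Cons: "lin (t # ts) = [:-t, 1:] * lin ts"
  by (simp add: lin_def)

lemma poly_lin: "poly (lin ts) x = prod_list (map (\<lambda>t. x - t) ts)"
  by (induction ts) (simp_all add: lin_def algebra_simps)

lemma poly_lin_zero: "poly (lin ts) x = 0 \<longleftrightarrow> x \<in> set ts"
  by (induction ts) (auto simp: lin_def)

lemma lin_deg: "degree (lin ts) = length ts \<and> lead_coeff (lin ts) = 1"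
proof (induction ts)
  case Nil thus ?case by (simp add: lin_def)
next
  case (Cons t ts)
  have nz: "lin ts \<noteq> 0" using Cons by auto
  have "degree (lin (t#ts)) = Suc (length ts)"
    unfolding lin_Cons using nz Cons by (subst degree_mult_eq) auto
  moreover have "lead_coeff (lin (t#ts)) = 1"
  proof -
    have l1: "lead_coeff (lin ts) = 1" using Cons by blast
    have "lead_coeff (lin (t#ts)) = lead_coeff [:-t, 1:] * lead_coeff (lin ts)"
      unfolding lin_Cons by (rule lead_coeff_mult)
    thus ?thesis using l1 by simp
  qed
  ultimately show ?case by simp
qed

lemma lin_sign:
  assumes "sorted_wrt (<) ts" "i \<le> length ts"
    "0 < i \<Longrightarrow> ts ! (i - 1) < x" "i < length ts \<Longrightarrow> x < ts ! i"
  shows "(-1)^(length ts - i) * poly (lin ts) x > 0"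
  using assms
proof (induction ts arbitrary: i)
  case Nil thus ?case by (simp add: lin_def)
next
  case (Cons t ts)
  have st: "\<forall>y\<in>set ts. t < y" "sorted_wrt (<) ts" using Cons.prems(1) by auto
  show ?case
  proof (cases i)
    case 0
    have xt: "x < t" using Cons.prems(4) 0 by simp
    have "(-1)^(length ts - 0) * poly (lin ts) x > 0"
    proof (rule Cons.IH[OF st(2)])
      show "0 < length ts \<Longrightarrow> x < ts ! 0"
        using xt st(1) by (metis nth_mem order.strict_trans)
    qed simp_all
    hence "(-1)^(length ts) * poly (lin ts) x * (t - x) > 0" using xt by simp
    thus ?thesis unfolding lin_Cons using 0 by (simp add: algebra_simps)
  next
    case (Suc i')
    have tx: "t < x"
    proof (cases i')
      case 0 thus ?thesis using Cons.prems(3) Suc by simp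
    next
      case (Suc i'')
      hence "ts ! i'' < x" using Cons.prems(3) \<open>i = Suc i'\<close> by simp
      moreover have "i'' < length ts" using Cons.prems(2) \<open>i = Suc i'\<close> Suc by simp
      ultimately show ?thesis using st(1) by (metis nth_mem order.strict_trans)
    qed
    have "(-1)^(length ts - i') * poly (lin ts) x > 0"
    proof (rule Cons.IH[OF st(2)])
      show "i' \<le> length ts" using Cons.prems(2) Suc by simp
      show "0 < i' \<Longrightarrow> ts ! (i' - 1) < x" using Cons.prems(3) Suc
        by (cases i') auto
      show "i' < length ts \<Longrightarrow> x < ts ! i'" using Cons.prems(4) Suc by simp
    qed
    hence "(-1)^(length ts - i') * poly (lin ts) x * (x - t) > 0" using tx by simp
    thus ?thesis unfolding lin_Cons using Suc by (simp add: algebra_simps)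
  qed
qed

lemma monic_pinfty:
  fixes p :: "real poly"
  assumes "lead_coeff p = 1"
  shows "\<exists>M. \<forall>x\<ge>M. poly p x > 0"
proof -
  obtain n where "\<forall>x\<ge>n. poly p x \<ge> lead_coeff p" using poly_pinfty_gt_lc[of p] assms by auto
  thus ?thesis using assms by (intro exI[of _ n]) force
qed

lemma monic_minfty:
  fixes p :: "real poly"
  assumes "lead_coeff p = 1"
  shows "\<exists>M. \<forall>x\<le>M. (-1)^(degree p) * poly p x > 0"
proof -
  define q where "q = smult ((-1)^(degree p)) (pcompose p [:0, -1:])"
  have dq: "degree [:0, -1::real:] = 1" by simp
  have "lead_coeff (pcompose p [:0, -1:]) = (-1)^(degree p)"
    using lead_coeff_comp[of "[:0, -1::real:]" p] assms by simp
  hence "lead_coeff q = 1" unfolding q_def by (simp add: lead_coeff_smult power_mult_distrib[symmetric])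
  then obtain M where M: "\<forall>x\<ge>M. poly q x > 0" using monic_pinfty by blast
  have "\<forall>x\<le>-M. (-1)^(degree p) * poly p x > 0"
  proof (intro allI impI)
    fix x assume "x \<le> -M"
    hence "poly q (-x) > 0" using M by auto
    thus "(-1)^(degree p) * poly p x > 0" unfolding q_def by (simp add: poly_pcompose)
  qed
  thus ?thesis by blast
qed

lemma sign_flip:
  fixes u v :: real
  assumes "(-1)^(Suc e) * u > 0" "(-1)^e * v > 0"
  shows "u * v < 0"
proof (cases "even e")
  case True thus ?thesis using assms by (auto intro: mult_neg_pos)
next
  case False thus ?thesis using assms by (auto intro: mult_pos_neg)
qed

lemma sorted_from_steps:
  assumes "\<And>i. Suc i < L \<Longrightarrow> f i < (f (Suc i) :: real)"
  shows "sorted_wrt (<) (map f [0..<L])"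
proof -
  have *: "i < j \<Longrightarrow> j < L \<Longrightarrow> f i < f j" for i j
  proof (induction j)
    case 0 thus ?case by simp
  next
    case (Suc j)
    show ?case
    proof (cases "i = j")
      case True thus ?thesis using assms Suc by simp
    next
      case False
      hence "f i < f j" using Suc by simp
      also have "f j < f (Suc j)" using assms Suc by simp
      finally show ?thesis .
    qed
  qed
  show ?thesis unfolding sorted_wrt_iff_nth_less using * by simp
qed

lemma roots_from_signs:
  fixes p :: "real poly"
  assumes deg: "degree p = m" and lc: "lead_coeff p = 1" and sorted: "sorted_wrt (<) ys"
    and L: "length ys = L" "1 \<le> L" "L \<le> m"
    and sg: "\<And>i. i < L \<Longrightarrow> (-1)^(m - 1 - i) * poly p (ys ! i) > 0"
  shows "\<exists>w. \<forall>i<L. poly p (w i) = 0 \<and> w i < ys ! i \<and> (0 < i \<longrightarrow> ys ! (i - 1) < w i)"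
proof -
  have ex: "\<exists>w. poly p w = 0 \<and> w < ys ! i \<and> (0 < i \<longrightarrow> ys ! (i - 1) < w)" if i: "i < L" for i
  proof (cases i)
    case 0
    obtain M where M: "\<forall>x\<le>M. (-1)^m * poly p x > 0" using monic_minfty[OF lc] deg by blast
    define x0 where "x0 = min M (ys ! 0 - 1)"
    have "(-1)^m * poly p x0 > 0" using M unfolding x0_def by simp
    moreover have "(-1)^(m - 1) * poly p (ys ! 0) > 0" using sg[of 0] L by simp
    moreover have "m = Suc (m - 1)" using L by simp
    ultimately have "poly p x0 * poly p (ys ! 0) < 0" by (metis sign_flip)
    moreover have "x0 < ys ! 0" unfolding x0_def by simp
    ultimately obtain w where "x0 < w" "w < ys ! 0" "poly p w = 0" using poly_IVT by blast
    thus ?thesis using 0 by blast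
  next
    case (Suc i')
    have a: "(-1)^(m - 1 - i') * poly p (ys ! i') > 0" using sg[of i'] Suc i by simp
    have b: "(-1)^(m - 1 - i) * poly p (ys ! i) > 0" using sg i by simp
    have "m - 1 - i' = Suc (m - 1 - i)" using Suc i L by simp
    hence "poly p (ys ! i') * poly p (ys ! i) < 0" using a b by (metis sign_flip)
    moreover have "ys ! i' < ys ! i" using sorted i L Suc by (simp add: sorted_wrt_nth_less)
    ultimately obtain w where "ys ! i' < w" "w < ys ! i" "poly p w = 0" using poly_IVT by blast
    thus ?thesis using Suc by auto
  qed
  thus ?thesis by metis
qed

fun Q :: "(nat \<Rightarrow> real) \<Rightarrow> (nat \<Rightarrow> real) \<Rightarrow> nat \<Rightarrow> real poly" where
  "Q A B 0 = 1"
| "Q A B (Suc 0) = [:- A 0, 1:]"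
| "Q A B (Suc (Suc k)) = [:- A (Suc k), 1:] * Q A B (Suc k) - smult (B (Suc k)) (Q A B k)"

lemma Q_deg: "degree (Q A B k) \<le> k \<and> coeff (Q A B k) k = 1"
proof (induction A B k rule: Q.induct)
  case (1 A B) thus ?case by simp
next
  case (2 A B) thus ?case by simp
next
  case (3 A B k)
  have d1: "degree (Q A B (Suc k)) \<le> Suc k" and c1: "coeff (Q A B (Suc k)) (Suc k) = 1"
    and d0: "degree (Q A B k) \<le> k" using 3 by auto
  have e: "[:- A (Suc k), 1:] * Q A B (Suc k) = smult (- A (Suc k)) (Q A B (Suc k)) + pCons 0 (Q A B (Suc k))"
    by (simp add: mult_pCons_left)
  have "degree ([:- A (Suc k), 1:] * Q A B (Suc k)) \<le> Suc (Suc k)"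
    unfolding e using d1 by (intro degree_add_le) (auto intro: order.trans[OF degree_smult_le] simp: degree_pCons_eq_if)
  moreover have "degree (smult (B (Suc k)) (Q A B k)) \<le> Suc (Suc k)"
    using d0 degree_smult_le[of "B (Suc k)" "Q A B k"] by simp
  ultimately have "degree (Q A B (Suc (Suc k))) \<le> Suc (Suc k)"
    by (simp add: degree_diff_le)
  moreover have "coeff (Q A B (Suc (Suc k))) (Suc (Suc k)) = 1"
  proof -
    have "coeff (Q A B (Suc k)) (Suc (Suc k)) = 0" using d1 by (simp add: coeff_eq_0)
    moreover have "coeff (Q A B k) (Suc (Suc k)) = 0" using d0 by (simp add: coeff_eq_0)
    ultimately show ?thesis by (simp add: e c1)
  qed
  ultimately show ?case by simp
qed

lemma Q_deg_eq: "degree (Q A B k) = k" and Q_lc: "lead_coeff (Q A B k) = 1"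
proof -
  have a: "degree (Q A B k) \<le> k" "coeff (Q A B k) k = 1" using Q_deg by auto
  hence "k \<le> degree (Q A B k)" by (intro le_degree) simp
  thus "degree (Q A B k) = k" using a by simp
  thus "lead_coeff (Q A B k) = 1" using a by simp
qed

lemma strict_sorted_list_of_set_set:
  "sorted_wrt (<) (xs :: real list) \<Longrightarrow> sorted_list_of_set (set xs) = xs"
  by (simp add: sorted_list_of_set_sort_remdups strict_sorted_iff distinct_remdups_id sorted_sort_id)

lemma monic_eq_lin:
  fixes p :: "real poly"
  assumes "degree p = m" "lead_coeff p = 1" "length ws = m" "distinct ws" "\<forall>w\<in>set ws. poly p w = 0"
  shows "p = lin ws"
proof (rule poly_eqI_degree_lead_coeff[of p m "lin ws" "set ws"])
  have d: "degree (lin ws) = m" and l: "lead_coeff (lin ws) = 1" using lin_deg[of ws] assms(3) by auto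
  have "coeff (lin ws) m = 1" using l unfolding d .
  thus "coeff p m = coeff (lin ws) m" using assms by simp
  show "m \<le> card (set ws)" using assms by (simp add: distinct_card)
  show "degree p \<le> m" using assms by simp
  show "degree (lin ws) \<le> m" using assms lin_deg[of ws] by simp
  show "\<And>z. z \<in> set ws \<Longrightarrow> poly p z = poly (lin ws) z" using assms poly_lin_zero by auto
qed

lemma Q_zeros:
  assumes B: "\<And>j. B (Suc j) > 0"
  shows "\<exists>ts ys. Q A B k = lin ts \<and> Q A B (Suc k) = lin ys \<and> sorted_wrt (<) ts \<and> sorted_wrt (<) ys
     \<and> length ts = k \<and> length ys = Suc k \<and> (\<forall>i<k. ys ! i < ts ! i \<and> ts ! i < ys ! Suc i)"
proof (induction k)
  case 0
  show ?case
    by (rule exI[of _ "[]"], rule exI[of _ "[A 0]"]) (simp add: lin_def)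
next
  case (Suc k)
  then obtain ts ys where IH: "Q A B k = lin ts" "Q A B (Suc k) = lin ys" "sorted_wrt (<) ts" "sorted_wrt (<) ys"
     "length ts = k" "length ys = Suc k" "\<forall>i<k. ys ! i < ts ! i \<and> ts ! i < ys ! Suc i" by blast
  define p where "p = Q A B (Suc (Suc k))"
  have pv: "poly p (ys ! i) = - B (Suc k) * poly (lin ts) (ys ! i)" if "i < Suc k" for i
  proof -
    have "poly (lin ys) (ys ! i) = 0" using that IH(6) poly_lin_zero by auto
    thus ?thesis unfolding p_def using IH(1,2) by simp
  qed
  have sg: "(-1)^(Suc (Suc k) - 1 - i) * poly p (ys ! i) > 0" if i: "i < Suc k" for i
  proof -
    have "(-1)^(length ts - i) * poly (lin ts) (ys ! i) > 0"
    proof (rule lin_sign[OF IH(3)])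
      show "i \<le> length ts" using i IH(5) by simp
      show "0 < i \<Longrightarrow> ts ! (i - 1) < ys ! i" using IH(7) i by (cases i) auto
      show "i < length ts \<Longrightarrow> ys ! i < ts ! i" using IH(7) IH(5) by auto
    qed
    hence "B (Suc k) * ((-1)^(k - i) * poly (lin ts) (ys ! i)) > 0" using B IH(5) by simp
    moreover have "Suc (Suc k) - 1 - i = Suc (k - i)" using i by simp
    ultimately show ?thesis using pv[OF i] by (simp add: algebra_simps)
  qed
  have pd: "degree p = Suc (Suc k)" unfolding p_def by (rule Q_deg_eq)
  have pl: "lead_coeff p = 1" unfolding p_def by (rule Q_lc)
  obtain w where w: "\<forall>i<Suc k. poly p (w i) = 0 \<and> w i < ys ! i \<and> (0 < i \<longrightarrow> ys ! (i - 1) < w i)"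
    using roots_from_signs[OF pd pl IH(4) IH(6), of] sg by auto
  obtain wt where wt: "ys ! k < wt" "poly p wt = 0"
  proof -
    obtain M where M: "\<forall>x\<ge>M. poly p x > 0" using monic_pinfty[OF pl] by blast
    define x1 where "x1 = max M (ys ! k + 1)"
    have "poly p x1 > 0" using M unfolding x1_def by simp
    moreover have "poly p (ys ! k) < 0" using sg[of k] by simp
    ultimately have "poly p (ys ! k) * poly p x1 < 0" by (simp add: mult_neg_pos)
    moreover have "ys ! k < x1" unfolding x1_def by simp
    ultimately obtain x where "ys ! k < x" "poly p x = 0" using poly_IVT by blast
    thus ?thesis using that by blast
  qed
  define w' where "w' = w(Suc k := wt)"
  define zs where "zs = map w' [0..<Suc (Suc k)]"
  have step: "Suc i < Suc (Suc k) \<Longrightarrow> w' i < ys ! i \<and> ys ! i < w' (Suc i)" for i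
  proof (cases "Suc i = Suc k")
    case True thus ?thesis using w wt unfolding w'_def by auto
  next
    case False
    assume i: "Suc i < Suc (Suc k)"
    hence "Suc i < Suc k" using False by simp
    hence "ys ! (Suc i - 1) < w (Suc i)" using w by blast
    thus ?thesis using w i False unfolding w'_def by auto
  qed
  have zs_sorted: "sorted_wrt (<) zs"
    unfolding zs_def by (rule sorted_from_steps) (use step in fastforce)
  have zs_roots: "\<forall>z\<in>set zs. poly p z = 0"
    unfolding zs_def w'_def using w wt by auto
  have zs_dist: "distinct zs" using zs_sorted strict_sorted_iff by blast
  have zs_len: "length zs = Suc (Suc k)" unfolding zs_def by simp
  have "p = lin zs"
    by (rule monic_eq_lin[OF pd pl zs_len zs_dist zs_roots])
  show ?case
  proof (intro exI conjI)
    show "Q A B (Suc k) = lin ys" by (fact IH(2))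
    show "Q A B (Suc (Suc k)) = lin zs" using \<open>p = lin zs\<close> p_def by simp
    show "sorted_wrt (<) ys" by (fact IH(4))
    show "sorted_wrt (<) zs" by (fact zs_sorted)
    show "length ys = Suc k" by (fact IH(6))
    show "length zs = Suc (Suc k)" unfolding zs_def by simp
    show "\<forall>i<Suc k. zs ! i < ys ! i \<and> ys ! i < zs ! Suc i"
      using step unfolding zs_def by (auto simp del: upt_Suc)
  qed
qed

theorem theorem3p6:
  fixes b c :: real and n :: nat
  assumes "0 < - b" "- b < 1" and "0 < c" "c < 1" and "n \<ge> 2"
    and "meixner n (- b + real (n + 1) * c / (1 - c)) b c \<noteq> 0"
  shows "let C = - b + real (n + 1) * c / (1 - c);
             Z1 = {x. (x - C) * meixner n x b c = 0};
             Z2 = {x. meixner (n + 1) x (b + 1) c = 0}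
         in card Z1 = n + 1 \<and> card Z2 = n + 1 \<and> interlace Z1 Z2"
proof -
  note hb1 = assms(1) and hb2 = assms(2) and hc1 = assms(3) and hc2 = assms(4) and hn = assms(5)
  define C where "C = - b + real (n + 1) * c / (1 - c)"
  have hM: "meixner n C b c \<noteq> 0" using assms(6) unfolding C_def .
  have c0: "c \<noteq> 0" and c1: "c \<noteq> 1" using hc1 hc2 by auto
  have pb: "\<forall>k. pochhammer b k \<noteq> 0"
  proof
    fix k show "pochhammer b k \<noteq> 0"
    proof
      assume "pochhammer b k = 0"
      then obtain j where "b = - real j" by (auto simp: pochhammer_eq_0_iff)
      thus False using hb1 hb2 by (cases j) auto
    qed
  qed
  have pa: "\<forall>k. pochhammer (b+1) k \<noteq> 0"
  proof
    fix k show "pochhammer (b+1) k \<noteq> 0"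
    proof
      assume "pochhammer (b+1) k = 0"
      then obtain j where "b + 1 = - real j" by (auto simp: pochhammer_eq_0_iff)
      thus False using hb2 by simp
    qed
  qed
  define Af where "Af = Aco (b+1) c"
  define Bf where "Bf = Bco (b+1) c"
  define QQ where "QQ = Q Af Bf"
  have meixQ2: "\<forall>x. meixner k x (b+1) c = poly (QQ k) x \<and> meixner (Suc k) x (b+1) c = poly (QQ (Suc k)) x" for k
  proof (induction k)
    case 0
    have "b + 1 \<noteq> 0" using hb2 by simp
    thus ?case using meixner_1[OF _ c0 c1] unfolding QQ_def Af_def by (simp add: meixner_0)
  next
    case (Suc k)
    have "meixner (Suc (Suc k)) x (b+1) c = poly (QQ (Suc (Suc k))) x" for x
      using meixner_ttrr[OF pa c0 c1, of k x] Suc unfolding QQ_def Af_def Bf_def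
      by (simp add: numeral_2_eq_2 left_diff_distrib)
    thus ?case using Suc by simp
  qed
  have meixQ: "meixner k x (b+1) c = poly (QQ k) x" for k x using meixQ2 by blast
  have Bpos: "\<And>j. Bf (Suc j) > 0"
  proof -
    fix j
    have "real (Suc j) + (b + 1) - 1 > 0" using hb2 by simp
    moreover have "(1 - c)^2 > 0" using hc2 by simp
    ultimately show "Bf (Suc j) > 0" unfolding Bf_def Bco_def using hc1
      by (intro divide_pos_pos mult_pos_pos) auto
  qed
  obtain ts ys where Z: "QQ n = lin ts" "QQ (Suc n) = lin ys" "sorted_wrt (<) ts" "sorted_wrt (<) ys"
     "length ts = n" "length ys = Suc n" "\<forall>i<n. ys ! i < ts ! i \<and> ts ! i < ys ! Suc i"
    using Q_zeros[of Bf Af n, OF Bpos] unfolding QQ_def by blast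
  obtain m where nm: "n = Suc m" using hn by (cases n) auto
  define \<alpha> where "\<alpha> = real n * c / (1 - c)"
  have \<alpha>pos: "\<alpha> > 0" unfolding \<alpha>_def using hc1 hc2 hn by simp
  have BnPos: "Bf n > 0" using Bpos nm by simp
  have Cid: "\<alpha> * (Af n - C) = Bf n"
  proof -
    have cc: "1 - c \<noteq> 0" using hc2 by simp
    define r where "r = 1 / (1 - c)"
    have r1: "r * (1 - c) = 1" unfolding r_def using cc by simp
    have e1: "\<alpha> = real n * c * r" unfolding \<alpha>_def r_def by simp
    have e2: "Af n = (real n + (real n + (b + 1)) * c) * r"
      unfolding Af_def Aco_def r_def by simp
    have e3: "Bf n = real n * (real n + (b + 1) - 1) * c * (r * r)"
      unfolding Bf_def Bco_def r_def by (simp add: power2_eq_square)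
    have e4: "C = - b + (real n + 1) * c * r" unfolding C_def r_def by simp
    show ?thesis unfolding e1 e2 e3 e4 using r1 by algebra
  qed
  have contig: "meixner n x b c = poly (QQ n) x + \<alpha> * poly (QQ (n-1)) x" for x
    using meixner_contig[OF pb _ c0 c1, of n x] pa hn unfolding \<alpha>_def meixQ by simp
  have rec: "poly (QQ (Suc n)) x = (x - Af n) * poly (QQ n) x - Bf n * poly (QQ (n-1)) x" for x
  proof -
    obtain m' where "m = Suc m'" using hn nm by (cases m) auto
    thus ?thesis unfolding QQ_def nm by (simp add: algebra_simps)
  qed
  define g where "g = QQ n + smult \<alpha> (QQ (n-1))"
  define f where "f = [:-C, 1:] * g"
  have dg: "degree g = n" and lg: "lead_coeff g = 1"
  proof -
    have d1: "degree (QQ n) = n" unfolding QQ_def by (rule Q_deg_eq)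
    have "degree (smult \<alpha> (QQ (n-1))) \<le> n - 1"
      using degree_smult_le[of \<alpha> "QQ (n-1)"] Q_deg_eq[of Af Bf "n-1"] unfolding QQ_def by simp
    hence lt: "degree (smult \<alpha> (QQ (n-1))) < degree (QQ n)" using d1 hn by simp
    show "degree g = n" unfolding g_def using degree_add_eq_left[OF lt] d1 by simp
    have "coeff (smult \<alpha> (QQ (n-1))) n = 0" using lt d1 coeff_eq_0[of "smult \<alpha> (QQ (n-1))" n] by linarith
    moreover have "coeff (QQ n) n = 1" using Q_lc[of Af Bf n] d1 unfolding QQ_def by simp
    ultimately show "lead_coeff g = 1" using \<open>degree g = n\<close> unfolding g_def by simp
  qed
  have gnz: "g \<noteq> 0" using lg by auto
  have fd: "degree f = Suc n" unfolding f_def using gnz dg by (subst degree_mult_eq) auto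
  have fl: "lead_coeff f = 1" unfolding f_def lead_coeff_mult using lg by simp
  have fnz: "f \<noteq> 0" using fl by auto
  have polyf: "poly f x = (x - C) * meixner n x b c" for x
    unfolding f_def g_def contig by (simp add: left_diff_distrib)
  have ysroot: "poly (QQ (Suc n)) (ys ! i) = 0" if "i < Suc n" for i
    using that Z(2,6) poly_lin_zero by auto
  have sg: "(-1)^(Suc n - 1 - i) * poly f (ys ! i) > 0" if i: "i < Suc n" for i
  proof -
    define y where "y = ys ! i"
    have qs: "(-1)^(n - i) * poly (QQ n) y > 0"
      unfolding Z(1) y_def using lin_sign[OF Z(3), of i "ys ! i"] Z(5,7) i
      by (cases i) auto
    have hq: "Bf n * poly (QQ (n-1)) y = (y - Af n) * poly (QQ n) y"
      using ysroot[OF i] rec[of y] unfolding y_def by simp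
    have key: "meixner n x b c * Bf n = (Bf n - \<alpha> * (Af n - x)) * poly (QQ n) x"
      if "Bf n * poly (QQ (n-1)) x = (x - Af n) * poly (QQ n) x" for x
      using that unfolding contig by algebra
    have yC: "y \<noteq> C"
    proof
      assume "y = C"
      hence "meixner n C b c * Bf n = 0" using key[OF hq] Cid by simp
      thus False using hM BnPos by simp
    qed
    have k2: "meixner n y b c * Bf n = (Bf n - \<alpha> * (Af n - y)) * poly (QQ n) y" by (rule key[OF hq])
    have H: "poly f y * Bf n = \<alpha> * (y - C)^2 * poly (QQ n) y"
      unfolding polyf using k2 Cid by algebra
    have "((-1)^(n - i) * poly f y) * Bf n = (-1)^(n - i) * (poly f y * Bf n)"
      by (simp only: mult.assoc)
    also have "\<dots> = (-1)^(n - i) * (\<alpha> * (y - C)^2 * poly (QQ n) y)" by (simp only: H)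
    also have "\<dots> = \<alpha> * (y - C)^2 * ((-1)^(n - i) * poly (QQ n) y)" by (simp only: mult_ac)
    finally have E1: "((-1)^(n - i) * poly f y) * Bf n = \<alpha> * (y - C)^2 * ((-1)^(n - i) * poly (QQ n) y)" .
    have E2: "\<alpha> * (y - C)^2 * ((-1)^(n - i) * poly (QQ n) y) > 0"
      using \<alpha>pos yC qs by simp
    have "((-1)^(n - i) * poly f y) * Bf n > 0" unfolding E1 by (rule E2)
    hence "(-1)^(n - i) * poly f y > 0" using BnPos by (simp add: zero_less_mult_iff)
    thus ?thesis unfolding y_def by simp
  qed
  obtain w where w: "\<forall>i<Suc n. poly f (w i) = 0 \<and> w i < ys ! i \<and> (0 < i \<longrightarrow> ys ! (i - 1) < w i)"
    using roots_from_signs[OF fd fl Z(4) Z(6)] sg by auto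
  define zs where "zs = map w [0..<Suc n]"
  have step: "w i < w (Suc i)" if "Suc i < Suc n" for i
  proof -
    have "w i < ys ! i" using w that by simp
    also have "ys ! i < w (Suc i)" using w that by (metis diff_Suc_1 zero_less_Suc)
    finally show ?thesis .
  qed
  have zs_sorted: "sorted_wrt (<) zs" unfolding zs_def by (rule sorted_from_steps) (use step in blast)
  have zs_dist: "distinct zs" using zs_sorted strict_sorted_iff by blast
  have zs_len: "length zs = Suc n" unfolding zs_def by simp
  have ys_dist: "distinct ys" using Z(4) strict_sorted_iff by blast
  have Z1: "{x. (x - C) * meixner n x b c = 0} = set zs"
  proof -
    have sub: "set zs \<subseteq> {x. poly f x = 0}" unfolding zs_def using w by auto
    have fin: "finite {x. poly f x = 0}" using poly_roots_finite[OF fnz] .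
    have "card {x. poly f x = 0} \<le> Suc n" using card_poly_roots_bound[OF fnz] fd by simp
    moreover have "card (set zs) = Suc n" using zs_dist zs_len by (simp add: distinct_card)
    ultimately have "card (set zs) = card {x. poly f x = 0}" using card_mono[OF fin sub] by simp
    hence "set zs = {x. poly f x = 0}" using card_subset_eq[OF fin sub] by simp
    thus ?thesis using polyf by simp
  qed
  have Z2: "{x. meixner (n + 1) x (b + 1) c = 0} = set ys"
    using Z(2) poly_lin_zero unfolding meixQ by auto
  have il: "\<forall>i<Suc n. zs ! i < ys ! i \<and> (Suc i < Suc n \<longrightarrow> ys ! i < zs ! Suc i)"
  proof (intro allI impI conjI)
    fix i assume i: "i < Suc n"
    show "zs ! i < ys ! i" using w i unfolding zs_def by (simp del: upt_Suc)
    assume si: "Suc i < Suc n"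
    have "ys ! (Suc i - 1) < w (Suc i)" using w si by blast
    moreover have "zs ! Suc i = w (Suc i)" using si unfolding zs_def by (simp del: upt_Suc)
    ultimately show "ys ! i < zs ! Suc i" by simp
  qed
  show ?thesis
    unfolding Let_def C_def[symmetric] Z1 Z2 interlace_def
    using zs_dist zs_len ys_dist Z(6) il
    by (simp add: distinct_card strict_sorted_list_of_set_set[OF zs_sorted]
                  strict_sorted_list_of_set_set[OF Z(4)])
qed


end
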